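(* The compact subsets of the Sorgenfrey line $\mathbb R_\ell$ are exactly the well-founded subdcpos of $(\mathbb R,\ge)$. They are all countable.
   Context: The Sorgenfrey line $\mathbb R_\ell$ is $\mathbb R$ with the topology generated by the half-open intervals $[a,b[$, $a<b$. A subset $Q\subseteq\mathbb R$ is a chain in $(\mathbb R,\ge)$ automatically; it is a subdcpo of $(\mathbb R,\ge)$ if for every non-empty subset $D\subseteq Q$, the supremum of $D$ in $(\mathbb R,\ge)$ (i.e. $\inf D$ in the usual order) exists in $\mathbb R$ and belongs to $Q$. It is well-founded in $(\mathbb R,\ge)$ if it contains no infinite strictly increasing sequence $r_0<r_1<\cdots$ (in the usual order). *)

theory Defs
  imports "HOL-Analysis.Analysis"
begin

definition sorgenfrey :: "real topology" where
  "sorgenfrey = topology_generated_by {{a..<b} | a b. a < b}"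

text \<open>Q is a subdcpo of (R, \<ge>): every non-empty subset D of Q has a supremum
in (R, \<ge>), i.e. an infimum in the usual order (D bounded below), and it lies in Q.\<close>
definition ge_subdcpo :: "real set \<Rightarrow> bool" where
  "ge_subdcpo Q \<longleftrightarrow> (\<forall>D. D \<noteq> {} \<and> D \<subseteq> Q \<longrightarrow> bdd_below D \<and> Inf D \<in> Q)"

text \<open>Q is well-founded in (R, \<ge>): no infinite strictly increasing sequence
(in the usual order) in Q.\<close>
definition ge_wellfounded :: "real set \<Rightarrow> bool" where
  "ge_wellfounded Q \<longleftrightarrow> \<not> (\<exists>r::nat \<Rightarrow> real. (\<forall>n. r n \<in> Q) \<and> (\<forall>n. r n < r (Suc n)))"

end

theory Submission
  imports Defs
begin

lemma topspace_sorg: "topspace sorgenfrey = UNIV"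
proof -
  have "x \<in> \<Union>{{a..<b} |a b. a < b}" for x :: real
  proof -
    have "{x..<x+1} \<in> {{a..<b} |a b. a < b}" by (intro CollectI exI[of _ x] exI[of _ "x+1"]) simp
    moreover have "x \<in> {x..<x+1}" by simp
    ultimately show ?thesis by blast
  qed
  then show ?thesis unfolding sorgenfrey_def topology_generated_by_topspace by blast
qed

lemma sorg_open_Ico: "openin sorgenfrey {a..<b}"
proof (cases "a < b")
  case True
  then show ?thesis unfolding sorgenfrey_def
    by (intro topology_generated_by_Basis) auto
next
  case False
  then have "{a..<b} = {}" by auto
  then show ?thesis by simp
qed

lemma sorg_open_lessThan: "openin sorgenfrey {..<a}"
proof -
  have "{..<a} = (\<Union>n::nat. {a - real n - 1..<a})"
  proof (auto)
    fix x assume "x < a"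
    obtain n :: nat where "a - x \<le> real n" using real_arch_simple by blast
    then show "\<exists>n. a - real n - 1 \<le> x" by (intro exI[of _ n]) simp
  qed
  then show ?thesis by (auto intro!: openin_Union sorg_open_Ico)
qed

lemma sorg_open_atLeast: "openin sorgenfrey {a..}"
proof -
  have "{a..} = (\<Union>n::nat. {a..<a + real n + 1})"
  proof (auto)
    fix x assume "a \<le> x"
    obtain n :: nat where "x - a \<le> real n" using real_arch_simple by blast
    then show "\<exists>n. x < a + real n + 1" by (intro exI[of _ n]) simp
  qed
  then show ?thesis by (auto intro!: openin_Union sorg_open_Ico)
qed

lemma sorg_nbhd:
  assumes "openin sorgenfrey U" "x \<in> U"
  shows "\<exists>e>0. {x..<x+e} \<subseteq> U"
proof -
  have "generate_topology_on {{a..<b} | a b. a < (b::real)} U"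
    using assms(1) unfolding sorgenfrey_def by (rule openin_topology_generated_by)
  then show ?thesis using assms(2)
  proof (induction arbitrary: x)
    case Empty
    then show ?case by simp
  next
    case (Int a b)
    then obtain e1 where e1: "e1 > 0" "{x..<x+e1} \<subseteq> a" by blast
    obtain e2 where e2: "e2 > 0" "{x..<x+e2} \<subseteq> b" using Int by blast
    have "{x..<x+min e1 e2} \<subseteq> {x..<x+e1}" "{x..<x+min e1 e2} \<subseteq> {x..<x+e2}" by auto
    then have "{x..<x+min e1 e2} \<subseteq> a \<inter> b" using e1 e2 by blast
    then show ?case using e1 e2 by (intro exI[of _ "min e1 e2"]) simp
  next
    case (UN K)
    then obtain k where "k \<in> K" "x \<in> k" by auto
    with UN obtain e where "e > 0" "{x..<x+e} \<subseteq> k" by blast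
    with \<open>k \<in> K\<close> show ?case by blast
  next
    case (Basis s)
    then obtain a b where s: "s = {a..<b}" "a < b" by auto
    with Basis show ?case by (intro exI[of _ "b - x"]) auto
  qed
qed

lemma compact_directed:
  assumes "compactin X S" "T \<noteq> {}" "\<And>t. t \<in> T \<Longrightarrow> openin X (U t)"
    "S \<subseteq> (\<Union>t\<in>T. U t)" "\<And>a b. a \<in> T \<Longrightarrow> b \<in> T \<Longrightarrow> \<exists>c\<in>T. U a \<union> U b \<subseteq> U c"
  shows "\<exists>t\<in>T. S \<subseteq> U t"
proof -
  obtain F where F: "finite F" "F \<subseteq> U ` T" "S \<subseteq> \<Union>F"
    using assms(1,3,4) unfolding compactin_def
    by (metis (no_types, lifting) image_iff)
  then obtain G where G: "G \<subseteq> T" "finite G" "F = U ` G"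
    by (metis finite_subset_image)
  have "\<exists>c\<in>T. \<Union>(U ` G) \<subseteq> U c" using G(2,1)
  proof (induction G rule: finite_induct)
    case empty
    then show ?case using assms(2) by auto
  next
    case (insert g G)
    then obtain c where "c \<in> T" "\<Union>(U ` G) \<subseteq> U c" by auto
    moreover obtain d where "d \<in> T" "U g \<union> U c \<subseteq> U d"
      using assms(5)[of g c] insert.prems \<open>c \<in> T\<close> by auto
    ultimately show ?case by auto
  qed
  then obtain c where "c \<in> T" "\<Union>(U ` G) \<subseteq> U c" by blast
  moreover have "S \<subseteq> \<Union>(U ` G)" using F G by simp
  ultimately show ?thesis by blast
qed

lemma wf_max:
  assumes "ge_wellfounded Q" "S \<subseteq> Q" "S \<noteq> {}"
  shows "\<exists>m\<in>S. \<forall>x\<in>S. x \<le> m"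
proof (rule ccontr)
  assume "\<not> ?thesis"
  then have "\<forall>m\<in>S. \<exists>x\<in>S. m < x" by (auto simp: not_le)
  then obtain f where f: "\<And>m. m \<in> S \<Longrightarrow> f m \<in> S \<and> m < f m" by metis
  obtain s0 where "s0 \<in> S" using assms(3) by auto
  define r where "r n = (f ^^ n) s0" for n
  have rS: "r n \<in> S" for n
    by (induction n) (auto simp: r_def \<open>s0 \<in> S\<close> f)
  have "r (Suc n) = f (r n)" for n by (simp add: r_def)
  then have "r n < r (Suc n)" for n using f rS by auto
  with rS assms(2) show False using assms(1) unfolding ge_wellfounded_def by blast
qed

lemma wf_countable:
  assumes W: "ge_wellfounded Q"
  shows "countable Q"
proof -
  define L where "L q = {x\<in>Q. x < q}" for q
  define p where "p q = (if L q = {} then q - 1 else (SOME m. m \<in> L q \<and> (\<forall>x\<in>L q. x \<le> m)))" for q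
  have p: "p q < q \<and> (\<forall>x\<in>Q. x < q \<longrightarrow> x \<le> p q)" for q
  proof (cases "L q = {}")
    case True
    then show ?thesis by (auto simp: p_def L_def)
  next
    case False
    have "\<exists>m. m \<in> L q \<and> (\<forall>x\<in>L q. x \<le> m)"
      using wf_max[OF W _ False] by (auto simp: L_def)
    then have "(SOME m. m \<in> L q \<and> (\<forall>x\<in>L q. x \<le> m)) \<in> L q \<and> (\<forall>x\<in>L q. x \<le> (SOME m. m \<in> L q \<and> (\<forall>x\<in>L q. x \<le> m)))"
      by (rule someI_ex)
    moreover have "p q = (SOME m. m \<in> L q \<and> (\<forall>x\<in>L q. x \<le> m))" using False p_def by simp
    ultimately have "p q \<in> L q \<and> (\<forall>x\<in>L q. x \<le> p q)" by simp
    then show ?thesis by (auto simp: L_def)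
  qed
  have "\<exists>r\<in>\<rat>. p q < r \<and> r < q" for q using p[of q] Rats_dense_in_real by blast
  then obtain g where g: "\<And>q. g q \<in> \<rat> \<and> p q < g q \<and> g q < q" by metis
  have inj: "inj_on g Q"
  proof (rule inj_onI, rule ccontr)
    fix a b assume ab: "a \<in> Q" "b \<in> Q" "g a = g b" "a \<noteq> b"
    show False
    proof (cases "a < b")
      case True
      then have "a \<le> p b" using p ab by auto
      then show ?thesis using g[of a] g[of b] ab by auto
    next
      case False
      then have "b < a" using ab by auto
      then have "b \<le> p a" using p ab by auto
      then show ?thesis using g[of a] g[of b] ab by auto
    qed
  qed
  have "countable (g ` Q)"
    by (rule countable_subset[OF _ countable_rat]) (use g in auto)
  then show ?thesis using inj by (rule countable_image_inj_on)
qed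

lemma compact_bounded:
  assumes K: "compactin sorgenfrey Q"
  shows "\<exists>N::real. Q \<subseteq> {-N..<N}"
proof -
  have "\<exists>n\<in>(UNIV::nat set). Q \<subseteq> {-real n..<real n}"
  proof (rule compact_directed[OF K])
    show "Q \<subseteq> (\<Union>n. {-real n..<real n})"
    proof
      fix x assume "x \<in> Q"
      obtain n :: nat where "\<bar>x\<bar> < real n" using reals_Archimedean2 by blast
      then show "x \<in> (\<Union>n. {-real n..<real n})" by (intro UN_I[of n]) auto
    qed
    show "\<exists>c\<in>UNIV. {-real a..<real a} \<union> {-real b..<real b} \<subseteq> {-real c..<real c}" for a b
      by (intro bexI[of _ "max a b"]) auto
  qed (auto intro: sorg_open_Ico)
  then show ?thesis by blast
qed

lemma compact_subdcpo:
  assumes K: "compactin sorgenfrey Q"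
  shows "ge_subdcpo Q"
  unfolding ge_subdcpo_def
proof (intro allI impI)
  fix D assume D: "D \<noteq> {} \<and> D \<subseteq> Q"
  obtain N where N: "Q \<subseteq> {-N..<N}" using compact_bounded[OF K] by blast
  have bd: "bdd_below D" using D N by (intro bdd_belowI[of _ "-N"]) auto
  moreover have "Inf D \<in> Q"
  proof (rule ccontr)
    assume nQ: "Inf D \<notin> Q"
    define s where "s = Inf D"
    have "\<exists>t\<in>{t. t > s}. Q \<subseteq> {..<s} \<union> {t..}"
    proof (rule compact_directed[OF K])
      show "{t. t > s} \<noteq> {}" by (auto intro: exI[of _ "s+1"])
      show "openin sorgenfrey ({..<s} \<union> {t..})" for t
        by (intro openin_Un sorg_open_lessThan sorg_open_atLeast)
      show "Q \<subseteq> (\<Union>t\<in>{t. t > s}. {..<s} \<union> {t..})"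
      proof
        fix q assume "q \<in> Q"
        then have "q \<noteq> s" using nQ s_def by auto
        show "q \<in> (\<Union>t\<in>{t. t > s}. {..<s} \<union> {t..})"
        proof (cases "q < s")
          case True
          then show ?thesis by (intro UN_I[of "s+1"]) auto
        next
          case False
          with \<open>q \<noteq> s\<close> have "s < q" by auto
          then show ?thesis by (intro UN_I[of q]) auto
        qed
      qed
      show "\<exists>c\<in>{t. t > s}. {..<s} \<union> {a..} \<union> ({..<s} \<union> {b..}) \<subseteq> {..<s} \<union> {c..}"
        if "a \<in> {t. t > s}" "b \<in> {t. t > s}" for a b
        using that by (intro bexI[of _ "min a b"]) auto
    qed
    then obtain t where t: "t > s" "Q \<subseteq> {..<s} \<union> {t..}" by auto
    have "\<forall>d\<in>D. t \<le> d"
    proof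
      fix d assume "d \<in> D"
      then have "s \<le> d" using bd s_def by (simp add: cInf_lower)
      moreover have "d \<in> Q" using D \<open>d \<in> D\<close> by auto
      ultimately show "t \<le> d" using t by auto
    qed
    then have "t \<le> Inf D" using D by (intro cInf_greatest) auto
    then show False using t s_def by auto
  qed
  ultimately show "bdd_below D \<and> Inf D \<in> Q" by blast
qed

lemma compact_wf:
  assumes K: "compactin sorgenfrey Q"
  shows "ge_wellfounded Q"
  unfolding ge_wellfounded_def
proof
  assume "\<exists>r. (\<forall>n. r n \<in> Q) \<and> (\<forall>n. r n < r (Suc n))"
  then obtain r where rQ: "\<And>n. r n \<in> Q" and rs: "\<And>n. r n < r (Suc n)" by blast
  obtain N where N: "Q \<subseteq> {-N..<N}" using compact_bounded[OF K] by blast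
  have rN: "r n \<le> N" for n using N rQ[of n] by auto
  have bda: "bdd_above (range r)" using rN by (intro bdd_aboveI[of _ N]) auto
  define s where "s = Sup (range r)"
  have sm: "strict_mono r" using rs by (intro strict_monoI_Suc)
  have rle: "r n \<le> s" for n unfolding s_def using bda by (intro cSup_upper) auto
  have rlt: "r n < s" for n using rs[of n] rle[of "Suc n"] by auto
  have "\<exists>n\<in>(UNIV::nat set). Q \<subseteq> {..<r n} \<union> {s..}"
  proof (rule compact_directed[OF K])
    show "openin sorgenfrey ({..<r n} \<union> {s..})" for n
      by (intro openin_Un sorg_open_lessThan sorg_open_atLeast)
    show "Q \<subseteq> (\<Union>n. {..<r n} \<union> {s..})"
    proof
      fix q assume "q \<in> Q"
      show "q \<in> (\<Union>n. {..<r n} \<union> {s..})"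
      proof (cases "s \<le> q")
        case True
        then show ?thesis by auto
      next
        case False
        then have "q < Sup (range r)" using s_def by auto
        then obtain y where "y \<in> range r" "q < y"
          using less_cSup_iff[of "range r" q] bda by auto
        then show ?thesis by auto
      qed
    qed
    show "\<exists>c\<in>UNIV. {..<r a} \<union> {s..} \<union> ({..<r b} \<union> {s..}) \<subseteq> {..<r c} \<union> {s..}" for a b
    proof (intro bexI[of _ "max a b"])
      have "r a \<le> r (max a b)" "r b \<le> r (max a b)"
        using sm by (auto simp: strict_mono_less_eq)
      then show "{..<r a} \<union> {s..} \<union> ({..<r b} \<union> {s..}) \<subseteq> {..<r (max a b)} \<union> {s..}"
        by auto
    qed auto
  qed auto
  then obtain n where "Q \<subseteq> {..<r n} \<union> {s..}" by auto
  then show False using rQ[of n] rlt[of n] by auto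
qed

lemma wf_dcpo_compact:
  assumes W: "ge_wellfounded Q" and D: "ge_subdcpo Q"
  shows "compactin sorgenfrey Q"
  unfolding compactin_def topspace_sorg
proof (intro conjI allI impI)
  show "Q \<subseteq> UNIV" by simp
  fix \<U> assume U: "(\<forall>U\<in>\<U>. openin sorgenfrey U) \<and> Q \<subseteq> \<Union>\<U>"
  show "\<exists>\<F>. finite \<F> \<and> \<F> \<subseteq> \<U> \<and> Q \<subseteq> \<Union>\<F>"
  proof (cases "Q = {}")
    case True
    then show ?thesis by auto
  next
    case False
    define A where "A = {q\<in>Q. \<exists>F. finite F \<and> F \<subseteq> \<U> \<and> Q \<inter> {q..} \<subseteq> \<Union>F}"
    have bQ: "bdd_below Q" "Inf Q \<in> Q" using D False unfolding ge_subdcpo_def by auto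
    define m where "m = Inf Q"
    have Qm: "Q \<subseteq> {m..}" using bQ m_def by (auto intro: cInf_lower)
    have "m \<in> A"
    proof (rule ccontr)
      assume "m \<notin> A"
      then have "Q - A \<noteq> {}" using bQ m_def by auto
      then obtain c where c: "c \<in> Q - A" "\<And>x. x \<in> Q - A \<Longrightarrow> x \<le> c"
        using wf_max[OF W, of "Q - A"] by auto
      have gtA: "q \<in> A" if "q \<in> Q" "c < q" for q using that c by force
      obtain U where "U \<in> \<U>" "c \<in> U" using U c by auto
      then obtain e where e: "e > 0" "{c..<c+e} \<subseteq> U" using sorg_nbhd U by blast
      have "\<exists>F. finite F \<and> F \<subseteq> \<U> \<and> Q \<inter> {c..} \<subseteq> \<Union>F"
      proof (cases "Q \<inter> {c<..<c+e} = {}")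
        case False
        then obtain q where q: "q \<in> Q" "c < q" "q < c + e" by auto
        then have "q \<in> A" using gtA by auto
        then obtain F where F: "finite F" "F \<subseteq> \<U>" "Q \<inter> {q..} \<subseteq> \<Union>F"
          unfolding A_def by blast
        have "Q \<inter> {c..} \<subseteq> \<Union>(insert U F)"
        proof
          fix x assume x: "x \<in> Q \<inter> {c..}"
          show "x \<in> \<Union>(insert U F)"
          proof (cases "x < q")
            case True
            then have "x \<in> U" using x q e by auto
            then show ?thesis by auto
          next
            case False
            then show ?thesis using F x by auto
          qed
        qed
        then show ?thesis using F \<open>U \<in> \<U>\<close> by (intro exI[of _ "insert U F"]) auto
      next
        case True
        show ?thesis
        proof (cases "Q \<inter> {c+e..} = {}")
          case True2: True
          have "Q \<inter> {c..} \<subseteq> \<Union>{U}"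
          proof
            fix x assume x: "x \<in> Q \<inter> {c..}"
            then have "x < c + e" using True2 by (auto simp: not_le[symmetric])
            then show "x \<in> \<Union>{U}" using x e by auto
          qed
          then show ?thesis using \<open>U \<in> \<U>\<close> by (intro exI[of _ "{U}"]) auto
        next
          case False
          define R where "R = Q \<inter> {c+e..}"
          have bR: "bdd_below R" "Inf R \<in> Q" using D False unfolding ge_subdcpo_def R_def by auto
          have "c + e \<le> Inf R" using False R_def by (intro cInf_greatest) auto
          then have "Inf R \<in> A" using gtA bR e by auto
          then obtain F where F: "finite F" "F \<subseteq> \<U>" "Q \<inter> {Inf R..} \<subseteq> \<Union>F"
            using A_def by auto
          have "Q \<inter> {c..} \<subseteq> \<Union>(insert U F)"
          proof
            fix x assume x: "x \<in> Q \<inter> {c..}"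
            show "x \<in> \<Union>(insert U F)"
            proof (cases "x < c + e")
              case True
              then have "x \<in> U" using x e by auto
              then show ?thesis by auto
            next
              case False
              then have "x \<in> R" using x R_def by auto
              then have "Inf R \<le> x" using bR by (intro cInf_lower)
              then show ?thesis using F x by auto
            qed
          qed
          then show ?thesis using F \<open>U \<in> \<U>\<close> by (intro exI[of _ "insert U F"]) auto
        qed
      qed
      then have "c \<in> A" using c A_def by auto
      then show False using c by auto
    qed
    then obtain F where "finite F" "F \<subseteq> \<U>" "Q \<inter> {m..} \<subseteq> \<Union>F" using A_def by auto
    then show ?thesis using Qm by (intro exI[of _ F]) auto
  qed
qed

theorem theorem4p15:
  fixes Q :: "real set"
  shows "(compactin sorgenfrey Q \<longleftrightarrow> ge_wellfounded Q \<and> ge_subdcpo Q)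
         \<and> (compactin sorgenfrey Q \<longrightarrow> countable Q)"
  using compact_wf compact_subdcpo wf_dcpo_compact wf_countable by blast

end
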